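(* Let $H$ be a separable complex Hilbert space, $(\Omega,\mu)$ a measure space with positive measure, let $K\in B(H)$ have closed range, let $F:\Omega\to H$ be a Parseval continuous $K$-frame of $H$, and let $\tilde F(\omega)=K^{\dagger}F(\omega)$ be its canonical dual continuous $K$-Bessel sequence. Let $f\in H$. Then for any $c\in L^2(\Omega,\mu)$ satisfying $Kf=\int_\Omega c(\omega)F(\omega)\,d\mu(\omega)$, we have $$\int_\Omega|c(\omega)|^2\,d\mu(\omega)=\int_\Omega|c(\omega)-\langle f,\tilde F(\omega)\rangle|^2\,d\mu(\omega)+\int_\Omega|\langle f,\tilde F(\omega)\rangle|^2\,d\mu(\omega).$$
   Context: A map $F:\Omega\to H$ is weakly measurable if $\omega\mapsto\langle f,F(\omega)\rangle$ is measurable for every $f\in H$. A Parseval continuous $K$-frame is a weakly measurable $F$ with $\int_\Omega|\langle f,F(\omega)\rangle|^2\,d\mu(\omega)=\|K^{\ast}f\|^2$ for all $f\in H$. Integrals $\int_\Omega c(\omega)F(\omega)\,d\mu(\omega)$ are understood weakly. $K^{\dagger}$ is the Moore–Penrose pseudo-inverse of the closed-range operator $K$; the canonical dual continuous $K$-Bessel sequence of $F$ is $K^{\dagger}F$, which satisfies $Kg=\int_\Omega\langle g,K^\dagger F(\omega)\rangle F(\omega)\,d\mu(\omega)$ for all $g\in H$. *)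

theory Defs
  imports "HOL-Analysis.Analysis" "HOL-Probability.Probability"
begin

class complex_vector = real_vector +
  fixes scaleC :: "complex \<Rightarrow> 'a \<Rightarrow> 'a"
  assumes scaleC_add_right: "scaleC a (x + y) = scaleC a x + scaleC a y"
    and scaleC_add_left: "scaleC (a + b) x = scaleC a x + scaleC b x"
    and scaleC_scaleC: "scaleC a (scaleC b x) = scaleC (a * b) x"
    and scaleC_one: "scaleC 1 x = x"
    and scaleR_scaleC: "scaleR r x = scaleC (complex_of_real r) x"

class complex_inner = complex_vector + real_normed_vector +
  fixes cinner :: "'a \<Rightarrow> 'a \<Rightarrow> complex"
  assumes cinner_commute: "cinner x y = cnj (cinner y x)"
    and cinner_add_left: "cinner (x + y) z = cinner x z + cinner y z"
    and cinner_scaleC_left: "cinner (scaleC a x) y = a * cinner x y"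
    and cinner_nonneg: "Im (cinner x x) = 0 \<and> 0 \<le> Re (cinner x x)"
    and cinner_eq_zero_iff: "cinner x x = 0 \<longleftrightarrow> x = 0"
    and norm_eq_sqrt_cinner: "norm x = sqrt (Re (cinner x x))"

text \<open>A (complex) Hilbert space is a complete complex inner product space:
  type class constraint \<open>{complex_inner, complete_space}\<close>.\<close>

definition separable_space :: "'a::topological_space itself \<Rightarrow> bool" where
  "separable_space _ \<longleftrightarrow> (\<exists>D::'a set. countable D \<and> closure D = UNIV)"

definition bounded_clinear :: "('a::complex_inner \<Rightarrow> 'b::complex_inner) \<Rightarrow> bool" where
  "bounded_clinear K \<longleftrightarrow>
     (\<forall>x y. K (x + y) = K x + K y) \<and> (\<forall>a x. K (scaleC a x) = scaleC a (K x)) \<and>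
     (\<exists>B. \<forall>x. norm (K x) \<le> B * norm x)"

definition orth_compl :: "'a::complex_inner set \<Rightarrow> 'a set" where
  "orth_compl M = {y. \<forall>x\<in>M. cinner x y = 0}"

definition ker :: "('a \<Rightarrow> 'b::zero) \<Rightarrow> 'a set" where
  "ker K = {x. K x = 0}"

definition cproj :: "'a::complex_inner set \<Rightarrow> 'a \<Rightarrow> 'a" where
  "cproj M y = (THE z. z \<in> M \<and> y - z \<in> orth_compl M)"

definition cadjoint :: "('a::complex_inner \<Rightarrow> 'b::complex_inner) \<Rightarrow> 'b \<Rightarrow> 'a" where
  "cadjoint K = (SOME G. \<forall>x y. cinner (K x) y = cinner x (G y))"

definition pinv :: "('a::complex_inner \<Rightarrow> 'a) \<Rightarrow> 'a \<Rightarrow> 'a" where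
  "pinv K y = (THE x. x \<in> orth_compl (ker K) \<and> K x = cproj (range K) y)"

definition weakly_measurable :: "'w measure \<Rightarrow> ('w \<Rightarrow> 'a::complex_inner) \<Rightarrow> bool" where
  "weakly_measurable M F \<longleftrightarrow> (\<forall>f. (\<lambda>\<omega>. cinner f (F \<omega>)) \<in> borel_measurable M)"

definition parseval_cont_K_frame ::
    "'w measure \<Rightarrow> ('a::complex_inner \<Rightarrow> 'a) \<Rightarrow> ('w \<Rightarrow> 'a) \<Rightarrow> bool" where
  "parseval_cont_K_frame M K F \<longleftrightarrow> weakly_measurable M F \<and>
     (\<forall>f. (\<integral>\<^sup>+\<omega>. ennreal ((cmod (cinner f (F \<omega>)))\<^sup>2) \<partial>M) = ennreal ((norm (cadjoint K f))\<^sup>2))"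

definition square_integrable :: "'w measure \<Rightarrow> ('w \<Rightarrow> complex) \<Rightarrow> bool" where
  "square_integrable M c \<longleftrightarrow> c \<in> borel_measurable M \<and> integrable M (\<lambda>\<omega>. (cmod (c \<omega>))\<^sup>2)"

definition has_weak_integral ::
    "'w measure \<Rightarrow> ('w \<Rightarrow> complex) \<Rightarrow> ('w \<Rightarrow> 'a::complex_inner) \<Rightarrow> 'a \<Rightarrow> bool" where
  "has_weak_integral M c F g \<longleftrightarrow>
     (\<forall>h. integrable M (\<lambda>\<omega>. c \<omega> * cinner (F \<omega>) h) \<and>
          cinner g h = (\<integral>\<omega>. c \<omega> * cinner (F \<omega>) h \<partial>M))"

end

theory Submission
  imports Defs
begin

lemma scaleC_zero_right[simp]: "scaleC a (0::'a::complex_vector) = 0"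
proof -
  have "scaleC a 0 + scaleC a 0 = scaleC a (0::'a) + 0"
    by (simp add: scaleC_add_right[symmetric])
  then show ?thesis by (rule add_left_imp_eq)
qed

lemma scaleC_zero_left[simp]: "scaleC 0 (x::'a::complex_vector) = 0"
  using scaleR_scaleC[of 0 x] by simp

lemma scaleC_minus_right: "scaleC a (- x) = - scaleC a (x::'a::complex_vector)"
proof -
  have "scaleC a (- x) + scaleC a x = 0"
    by (simp add: scaleC_add_right[symmetric])
  then show ?thesis by (simp add: eq_neg_iff_add_eq_0)
qed

lemma scaleC_diff_right: "scaleC a (x - y) = scaleC a x - scaleC a (y::'a::complex_vector)"
  using scaleC_add_right[of a x "- y"] by (simp add: scaleC_minus_right)

lemma scaleC_minus1: "scaleC (-1) x = - (x::'a::complex_vector)"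
  using scaleR_scaleC[of "-1" x] by simp

lemma scaleC_minus_left: "scaleC (- a) x = - scaleC a (x::'a::complex_vector)"
proof -
  have "scaleC (- a) x = scaleC (-1) (scaleC a x)" by (simp add: scaleC_scaleC)
  then show ?thesis by (simp add: scaleC_minus1)
qed

lemma scaleC_diff_left: "scaleC (a - b) x = scaleC a x - scaleC b (x::'a::complex_vector)"
  using scaleC_add_left[of a "- b" x] by (simp add: scaleC_minus_left)

lemma cinner_add_right: "cinner x (y + z) = cinner x y + cinner x (z::'a::complex_inner)"
  by (subst (1 2 3) cinner_commute) (simp add: cinner_add_left)

lemma cinner_scaleC_right: "cinner x (scaleC a y) = cnj a * cinner x (y::'a::complex_inner)"
  by (subst (1 2) cinner_commute) (simp add: cinner_scaleC_left)

lemma cinner_zero_left[simp]: "cinner 0 (y::'a::complex_inner) = 0"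
  using cinner_scaleC_left[of 0 0 y] by simp

lemma cinner_zero_right[simp]: "cinner (x::'a::complex_inner) 0 = 0"
  using cinner_scaleC_right[of x 0 0] by simp

lemma cinner_minus_left: "cinner (- x) (y::'a::complex_inner) = - cinner x y"
  using cinner_scaleC_left[of "-1" x y] by (simp add: scaleC_minus1)

lemma cinner_minus_right: "cinner x (- y::'a::complex_inner) = - cinner x y"
  using cinner_scaleC_right[of x "-1" y] by (simp add: scaleC_minus1)

lemma cinner_diff_left: "cinner (x - y) (z::'a::complex_inner) = cinner x z - cinner y z"
  using cinner_add_left[of x "- y" z] by (simp add: cinner_minus_left)

lemma cinner_diff_right: "cinner x (y - z::'a::complex_inner) = cinner x y - cinner x z"
  using cinner_add_right[of x y "- z"] by (simp add: cinner_minus_right)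

lemma cinner_scaleR_left: "cinner (scaleR r x) (y::'a::complex_inner) = of_real r * cinner x y"
  by (simp add: scaleR_scaleC cinner_scaleC_left)

lemma cinner_scaleR_right: "cinner x (scaleR r y::'a::complex_inner) = of_real r * cinner x y"
  by (simp add: scaleR_scaleC cinner_scaleC_right)

lemma norm_sq_cinner: "(norm x)\<^sup>2 = Re (cinner x (x::'a::complex_inner))"
  by (simp add: norm_eq_sqrt_cinner cinner_nonneg)

lemma cinner_self: "cinner x x = complex_of_real ((norm (x::'a::complex_inner))\<^sup>2)"
  by (simp add: norm_sq_cinner complex_eq_iff cinner_nonneg)

lemma cinner_self_eq_zero: "cinner x x = 0 \<Longrightarrow> (x::'a::complex_inner) = 0"
  using cinner_eq_zero_iff by blast

lemma norm_scaleC: "norm (scaleC a x) = cmod a * norm (x::'a::complex_inner)"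
proof -
  have "(norm (scaleC a x))\<^sup>2 = Re (a * cnj a * cinner x x)"
    by (simp only: norm_sq_cinner cinner_scaleC_left cinner_scaleC_right mult.assoc mult.left_commute)
  also have "a * cnj a * cinner x x = complex_of_real ((cmod a * norm x)\<^sup>2)"
    by (simp only: cinner_self complex_norm_square[symmetric] power_mult_distrib of_real_mult of_real_power)
  finally show ?thesis
    by (simp add: power2_eq_imp_eq)
qed

lemma cinner_expand:
  "cinner (x + y) (x + y) = cinner x x + cinner x y + cinner y x + cinner (y::'a::complex_inner) y"
  by (simp add: cinner_add_left cinner_add_right)

lemma norm_add_sq:
  "(norm (x + y))\<^sup>2 = (norm x)\<^sup>2 + 2 * Re (cinner x y) + (norm (y::'a::complex_inner))\<^sup>2"
proof -
  have "Re (cinner y x) = Re (cinner x y)" by (subst cinner_commute) simp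
  then show ?thesis by (simp add: norm_sq_cinner cinner_expand)
qed

lemma norm_diff_sq:
  "(norm (x - y))\<^sup>2 = (norm x)\<^sup>2 - 2 * Re (cinner x y) + (norm (y::'a::complex_inner))\<^sup>2"
  using norm_add_sq[of x "- y"] by (simp add: cinner_minus_right)

lemma pythagoras:
  "cinner x y = 0 \<Longrightarrow> (norm (x + y))\<^sup>2 = (norm x)\<^sup>2 + (norm (y::'a::complex_inner))\<^sup>2"
  by (simp add: norm_add_sq)

lemma pythagoras_le:
  "cinner x y = 0 \<Longrightarrow> norm x \<le> norm (x + (y::'a::complex_inner))"
  by (metis pythagoras abs_norm_cancel le_add_same_cancel1 real_sqrt_abs real_sqrt_le_mono zero_le_power2)

lemma cauchy_schwarz: "cmod (cinner x y) \<le> norm x * norm (y::'a::complex_inner)"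
proof (cases "y = 0")
  case True then show ?thesis by simp
next
  case False
  define a where "a = cinner x y"
  define n where "n = (norm y)\<^sup>2"
  have n: "n > 0" using False by (simp add: n_def)
  define t where "t = a / complex_of_real n"
  have yx: "cinner y x = cnj a" by (simp add: a_def cinner_commute[of y x])
  have "0 \<le> (norm (x - scaleC t y))\<^sup>2" by simp
  also have "\<dots> = (norm x)\<^sup>2 - 2 * Re (cnj t * a) + cmod t ^ 2 * n"
    by (simp add: norm_diff_sq cinner_scaleC_right a_def norm_scaleC power_mult_distrib n_def)
  also have "cnj t * a = complex_of_real ((cmod a)\<^sup>2 / n)"
    by (simp add: t_def complex_norm_square[symmetric] mult.commute)
  also have "cmod t ^ 2 * n = (cmod a)\<^sup>2 / n"
    using n by (simp add: t_def norm_divide power_divide power2_eq_square)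
  finally have "(cmod a)\<^sup>2 \<le> (norm x)\<^sup>2 * n"
    using n by (simp add: field_simps)
  then have "(cmod a)\<^sup>2 \<le> (norm x * norm y)\<^sup>2"
    by (simp add: n_def power_mult_distrib)
  then show ?thesis
    unfolding a_def by (rule power2_le_imp_le) simp
qed

lemma bounded_linear_cinner_left: "bounded_linear (\<lambda>x. cinner x (y::'a::complex_inner))"
proof (rule bounded_linear_intro)
  show "cinner (x + z) y = cinner x y + cinner z y" for x z by (rule cinner_add_left)
  show "cinner (scaleR r x) y = scaleR r (cinner x y)" for r x
    by (simp add: cinner_scaleR_left scaleR_conv_of_real)
  show "norm (cinner x y) \<le> norm x * norm y" for x
    using cauchy_schwarz by blast
qed

lemma bounded_linear_cinner_right: "bounded_linear (\<lambda>y. cinner (x::'a::complex_inner) y)"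
proof (rule bounded_linear_intro)
  show "cinner x (y + z) = cinner x y + cinner x z" for y z by (rule cinner_add_right)
  show "cinner x (scaleR r y) = scaleR r (cinner x y)" for r y
    by (simp add: cinner_scaleR_right scaleR_conv_of_real)
  show "norm (cinner x y) \<le> norm y * norm x" for y
    using cauchy_schwarz by (metis mult.commute)
qed

lemma continuous_cinner_left: "continuous_on UNIV (\<lambda>x. cinner x (y::'a::complex_inner))"
  by (simp add: bounded_linear_cinner_left linear_continuous_on)

lemma continuous_cinner_right: "continuous_on UNIV (\<lambda>y. cinner (x::'a::complex_inner) y)"
  by (simp add: bounded_linear_cinner_right linear_continuous_on)

lemma bounded_clinear_bounded_linear:
  assumes "bounded_clinear (K::'a::complex_inner \<Rightarrow> 'b::complex_inner)"
  shows "bounded_linear K"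
proof -
  from assms obtain B where add: "\<And>x y. K (x + y) = K x + K y"
    and sc: "\<And>a x. K (scaleC a x) = scaleC a (K x)" and B: "\<And>x. norm (K x) \<le> B * norm x"
    unfolding bounded_clinear_def by blast
  show ?thesis
  proof (rule bounded_linear_intro)
    show "K (x + y) = K x + K y" for x y by (rule add)
    show "K (scaleR r x) = scaleR r (K x)" for r x by (simp add: scaleR_scaleC sc)
    show "norm (K x) \<le> norm x * B" for x using B by (metis mult.commute)
  qed
qed

definition csub :: "'a::complex_vector set \<Rightarrow> bool" where
  "csub M \<longleftrightarrow> 0 \<in> M \<and> (\<forall>x\<in>M. \<forall>y\<in>M. x + y \<in> M) \<and> (\<forall>a. \<forall>x\<in>M. scaleC a x \<in> M)"

lemma csub_0: "csub M \<Longrightarrow> 0 \<in> M" by (simp add: csub_def)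
lemma csub_add: "csub M \<Longrightarrow> x \<in> M \<Longrightarrow> y \<in> M \<Longrightarrow> x + y \<in> M" by (simp add: csub_def)
lemma csub_scaleC: "csub M \<Longrightarrow> x \<in> M \<Longrightarrow> scaleC a x \<in> M" by (simp add: csub_def)
lemma csub_minus: "csub M \<Longrightarrow> x \<in> M \<Longrightarrow> - x \<in> M"
  using csub_scaleC[of M x "-1"] by (simp add: scaleC_minus1)
lemma csub_diff: "csub M \<Longrightarrow> x \<in> M \<Longrightarrow> y \<in> M \<Longrightarrow> x - y \<in> M"
  using csub_add[of M x "- y"] csub_minus[of M y] by simp
lemma csub_scaleR: "csub M \<Longrightarrow> x \<in> M \<Longrightarrow> scaleR r x \<in> M"
  by (simp add: scaleR_scaleC csub_scaleC)

lemma orth_complI: "(\<And>x. x \<in> M \<Longrightarrow> cinner x y = 0) \<Longrightarrow> y \<in> orth_compl M"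
  by (simp add: orth_compl_def)
lemma orth_complD: "y \<in> orth_compl M \<Longrightarrow> x \<in> M \<Longrightarrow> cinner x y = 0"
  by (simp add: orth_compl_def)
lemma orth_complD': "y \<in> orth_compl M \<Longrightarrow> x \<in> M \<Longrightarrow> cinner y x = 0"
  by (metis orth_complD cinner_commute complex_cnj_zero)

lemma csub_orth_compl: "csub (orth_compl M)"
  unfolding csub_def orth_compl_def
  by (simp add: cinner_add_right cinner_scaleC_right)

lemma orth_compl_inter: "x \<in> M \<Longrightarrow> x \<in> orth_compl M \<Longrightarrow> x = 0"
  using orth_complD cinner_self_eq_zero by blast

lemma closed_orth_compl: "closed (orth_compl (M::'a::complex_inner set))"
proof -
  have "orth_compl M = (\<Inter>x\<in>M. (\<lambda>y. cinner x y) -` {0})"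
    by (auto simp: orth_compl_def)
  also have "closed \<dots>"
    by (intro closed_INT ballI continuous_closed_vimage)
       (auto simp: linear_continuous_at bounded_linear_cinner_right)
  finally show ?thesis .
qed

lemma parallelogram:
  "(norm (a + b))\<^sup>2 + (norm (a - b))\<^sup>2 = 2 * (norm a)\<^sup>2 + 2 * (norm (b::'a::complex_inner))\<^sup>2"
  by (simp add: norm_add_sq norm_diff_sq)

lemma min_imp_orth:
  fixes M :: "'a::complex_inner set"
  assumes "csub M" "z \<in> M" and min: "\<And>m. m \<in> M \<Longrightarrow> norm (y - z) \<le> norm (y - m)"
  shows "y - z \<in> orth_compl M"
proof (rule orth_complI)
  fix m assume m: "m \<in> M"
  define w where "w = y - z"
  define a where "a = cinner m w"
  define s where "s = 1 / ((norm m)\<^sup>2 + 1)"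
  have p: "0 < (norm m)\<^sup>2 + 1" by (simp add: add_nonneg_pos)
  have s: "s > 0" "s * (norm m)\<^sup>2 < 1" using p by (auto simp: s_def field_simps)
  define t where "t = complex_of_real s * cnj a"
  have "z + scaleC t m \<in> M" using assms m by (simp add: csub_add csub_scaleC)
  then have "norm w \<le> norm (w - scaleC t m)"
    using min[of "z + scaleC t m"] by (simp add: w_def algebra_simps)
  then have "(norm w)\<^sup>2 \<le> (norm (w - scaleC t m))\<^sup>2" by simp
  also have "\<dots> = (norm w)\<^sup>2 - 2 * Re (cnj t * cinner w m) + (cmod t)\<^sup>2 * (norm m)\<^sup>2"
    by (simp add: norm_diff_sq cinner_scaleC_right norm_scaleC power_mult_distrib)
  also have "cinner w m = cnj a" by (simp add: a_def cinner_commute[of w m])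
  also have "cnj t * cnj a = complex_of_real (s * (cmod a)\<^sup>2)"
    using complex_norm_square[of a] by (simp add: t_def mult.assoc)
  also have "(cmod t)\<^sup>2 = s\<^sup>2 * (cmod a)\<^sup>2"
    using s by (simp add: t_def norm_mult power_mult_distrib)
  finally have "0 \<le> s * (cmod a)\<^sup>2 * (s * (norm m)\<^sup>2 - 2)"
    by (simp add: algebra_simps power2_eq_square)
  moreover have "s * (norm m)\<^sup>2 - 2 < 0" using s by simp
  ultimately have "s * (cmod a)\<^sup>2 \<le> 0"
    by (simp add: mult_le_0_iff zero_le_mult_iff)
  then have "cmod a = 0" using s by (simp add: mult_le_0_iff)
  then show "cinner m (y - z) = 0" by (simp add: a_def w_def)
qed

lemma exists_min:
  fixes M :: "'a::{complex_inner,complete_space} set"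
  assumes "csub M" "closed M"
  shows "\<exists>z\<in>M. \<forall>m\<in>M. norm (y - z) \<le> norm (y - m)"
proof -
  define D where "D = (\<lambda>m. norm (y - m)) ` M"
  define \<delta> where "\<delta> = Inf D"
  have ne: "D \<noteq> {}" using csub_0[OF assms(1)] by (auto simp: D_def)
  have bdd: "bdd_below D" by (auto simp: D_def intro!: bdd_belowI[of _ 0])
  have low: "\<delta> \<le> norm (y - m)" if "m \<in> M" for m
    unfolding \<delta>_def using that bdd by (auto simp: D_def intro!: cInf_lower)
  have d0: "0 \<le> \<delta>" unfolding \<delta>_def using ne by (auto simp: D_def intro!: cInf_greatest)
  define e where "e = (\<lambda>n::nat. inverse (real (Suc n)))"
  have e0: "e n > 0" for n by (simp add: e_def)
  have "\<exists>m\<in>M. norm (y - m) < \<delta> + e n" for n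
  proof -
    have "Inf D < \<delta> + e n" using e0[of n] by (simp add: \<delta>_def)
    then obtain d where "d \<in> D" "d < \<delta> + e n" using cInf_lessD[OF ne] by blast
    then show ?thesis by (auto simp: D_def)
  qed
  then obtain s where sM: "\<And>n. s n \<in> M" and sl: "\<And>n. norm (y - s n) < \<delta> + e n"
    by metis
  have key: "(norm (s n - s k))\<^sup>2 \<le> 2 * (\<delta> + e n)\<^sup>2 + 2 * (\<delta> + e k)\<^sup>2 - 4 * \<delta>\<^sup>2" for n k
  proof -
    define a where "a = y - s n"
    define b where "b = y - s k"
    have ab: "a - b = s k - s n" by (simp add: a_def b_def)
    have mid: "scaleR (1/2) (s n + s k) \<in> M"
      using assms(1) sM by (simp add: csub_add csub_scaleR)
    have "a + b = scaleR 2 (y - scaleR (1/2) (s n + s k))"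
      by (simp add: a_def b_def algebra_simps scaleR_2)
    then have "norm (a + b) = 2 * norm (y - scaleR (1/2) (s n + s k))" by simp
    then have "2 * \<delta> \<le> norm (a + b)" using low[OF mid] by simp
    then have "(2 * \<delta>)\<^sup>2 \<le> (norm (a + b))\<^sup>2" using d0 power_mono[of "2*\<delta>" "norm (a+b)" 2] by simp
    moreover have "(norm a)\<^sup>2 \<le> (\<delta> + e n)\<^sup>2"
      using sl[of n] by (simp add: a_def power_mono)
    moreover have "(norm b)\<^sup>2 \<le> (\<delta> + e k)\<^sup>2"
      using sl[of k] by (simp add: b_def power_mono)
    moreover have "norm (s n - s k) = norm (a - b)" by (simp add: ab norm_minus_commute)
    ultimately show ?thesis using parallelogram[of a b] by (simp add: power_mult_distrib)
  qed
  have "Cauchy s"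
  proof (rule metric_CauchyI)
    fix \<epsilon> :: real assume "\<epsilon> > 0"
    obtain N :: nat where N: "(8 * \<delta> + 4) / \<epsilon>\<^sup>2 < real N" using reals_Archimedean2 by blast
    have "\<forall>n\<ge>N. \<forall>k\<ge>N. dist (s n) (s k) < \<epsilon>"
    proof (intro allI impI)
      fix n k assume nk: "N \<le> n" "N \<le> k"
      define \<eta> where "\<eta> = inverse (real (Suc N))"
      have \<eta>: "0 < \<eta>" "\<eta> \<le> 1" by (auto simp: \<eta>_def field_simps)
      have en: "e n \<le> \<eta>" "e k \<le> \<eta>" using nk by (auto simp: e_def \<eta>_def intro!: le_imp_inverse_le)
      have "(\<delta> + e n)\<^sup>2 \<le> (\<delta> + \<eta>)\<^sup>2" "(\<delta> + e k)\<^sup>2 \<le> (\<delta> + \<eta>)\<^sup>2"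
        using en d0 e0[of n] e0[of k] by (auto intro!: power_mono)
      then have "(dist (s n) (s k))\<^sup>2 \<le> 4 * (\<delta> + \<eta>)\<^sup>2 - 4 * \<delta>\<^sup>2"
        using key[of n k] by (simp add: dist_norm)
      also have "\<dots> = \<eta> * (8 * \<delta> + 4 * \<eta>)" by (simp add: power2_eq_square algebra_simps)
      also have "\<dots> \<le> \<eta> * (8 * \<delta> + 4)" using \<eta> by (intro mult_left_mono) auto
      also have "\<dots> < \<epsilon>\<^sup>2"
      proof -
        have "(8 * \<delta> + 4) < \<epsilon>\<^sup>2 * real (Suc N)"
          using N \<open>\<epsilon> > 0\<close> by (simp add: field_simps) (smt (verit) zero_less_power)
        then show ?thesis using \<eta> by (simp add: \<eta>_def field_simps)
      qed
      finally show "dist (s n) (s k) < \<epsilon>"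
        using \<open>\<epsilon> > 0\<close> by (simp add: power_less_imp_less_base)
    qed
    then show "\<exists>N. \<forall>n\<ge>N. \<forall>k\<ge>N. dist (s n) (s k) < \<epsilon>" by blast
  qed
  then obtain z where lim: "s \<longlonglongrightarrow> z" using Cauchy_convergent_iff convergent_def by blast
  have zM: "z \<in> M" using assms(2) sM lim closed_sequentially by blast
  have "(\<lambda>n. norm (y - s n)) \<longlonglongrightarrow> norm (y - z)" by (intro tendsto_intros lim)
  moreover have "(\<lambda>n. \<delta> + e n) \<longlonglongrightarrow> \<delta> + 0"
    unfolding e_def by (intro tendsto_intros LIMSEQ_inverse_real_of_nat)
  ultimately have "norm (y - z) \<le> \<delta> + 0"
    using sl by (intro LIMSEQ_le) (auto intro: less_imp_le)
  then show ?thesis using zM low by force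
qed

lemma proj_exists:
  fixes M :: "'a::{complex_inner,complete_space} set"
  assumes "csub M" "closed M"
  shows "\<exists>z\<in>M. y - z \<in> orth_compl M"
  using exists_min[OF assms, of y] min_imp_orth[OF assms(1)] by blast

lemma proj_unique:
  fixes M :: "'a::complex_inner set"
  assumes "csub M" "z1 \<in> M" "y - z1 \<in> orth_compl M" "z2 \<in> M" "y - z2 \<in> orth_compl M"
  shows "z1 = z2"
proof -
  have "z1 - z2 \<in> M" using assms by (simp add: csub_diff)
  moreover have "z1 - z2 = (y - z2) - (y - z1)" by simp
  then have "z1 - z2 \<in> orth_compl M" using assms csub_orth_compl by (metis csub_diff)
  ultimately show ?thesis using orth_compl_inter by fastforce
qed

lemma cproj:
  fixes M :: "'a::{complex_inner,complete_space} set"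
  assumes "csub M" "closed M"
  shows "cproj M y \<in> M" "y - cproj M y \<in> orth_compl M"
proof -
  have "\<exists>!z. z \<in> M \<and> y - z \<in> orth_compl M"
    using proj_exists[OF assms, of y] proj_unique[OF assms(1)] by blast
  then have "cproj M y \<in> M \<and> y - cproj M y \<in> orth_compl M"
    unfolding cproj_def by (rule theI')
  then show "cproj M y \<in> M" "y - cproj M y \<in> orth_compl M" by auto
qed

lemma cproj_eq:
  fixes M :: "'a::{complex_inner,complete_space} set"
  assumes "csub M" "closed M" "z \<in> M" "y - z \<in> orth_compl M"
  shows "cproj M y = z"
  using proj_unique[OF assms(1) cproj[OF assms(1,2)] assms(3,4)] .

lemma cproj_norm:
  fixes M :: "'a::{complex_inner,complete_space} set"
  assumes "csub M" "closed M"
  shows "norm (cproj M y) \<le> norm y"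
proof -
  have "cinner (cproj M y) (y - cproj M y) = 0"
    using cproj[OF assms] orth_complD by blast
  then show ?thesis using pythagoras_le[of "cproj M y" "y - cproj M y"] by simp
qed

lemma cproj_add:
  fixes M :: "'a::{complex_inner,complete_space} set"
  assumes "csub M" "closed M"
  shows "cproj M (x + y) = cproj M x + cproj M y"
proof (rule cproj_eq[OF assms])
  show "cproj M x + cproj M y \<in> M" using cproj[OF assms] assms(1) by (simp add: csub_add)
  have "x + y - (cproj M x + cproj M y) = (x - cproj M x) + (y - cproj M y)" by simp
  then show "x + y - (cproj M x + cproj M y) \<in> orth_compl M"
    using cproj[OF assms] csub_orth_compl by (metis csub_add)
qed

lemma cproj_scaleC:
  fixes M :: "'a::{complex_inner,complete_space} set"
  assumes "csub M" "closed M"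
  shows "cproj M (scaleC a x) = scaleC a (cproj M x)"
proof (rule cproj_eq[OF assms])
  show "scaleC a (cproj M x) \<in> M" using cproj[OF assms] assms(1) by (simp add: csub_scaleC)
  have "scaleC a x - scaleC a (cproj M x) = scaleC a (x - cproj M x)" by (simp add: scaleC_diff_right)
  then show "scaleC a x - scaleC a (cproj M x) \<in> orth_compl M"
    using cproj[OF assms] csub_orth_compl by (metis csub_scaleC)
qed

lemma riesz:
  fixes \<phi> :: "'a::{complex_inner,complete_space} \<Rightarrow> complex"
  assumes add: "\<And>x y. \<phi> (x + y) = \<phi> x + \<phi> y"
    and sc: "\<And>a x. \<phi> (scaleC a x) = a * \<phi> x"
    and bnd: "\<And>x. cmod (\<phi> x) \<le> B * norm x"
  shows "\<exists>w. \<forall>x. \<phi> x = cinner x w"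
proof (cases "\<forall>x. \<phi> x = 0")
  case True then show ?thesis by (intro exI[of _ 0]) simp
next
  case False
  then obtain x0 where x0: "\<phi> x0 \<noteq> 0" by blast
  have bl: "bounded_linear \<phi>"
  proof (rule bounded_linear_intro)
    show "\<phi> (x + y) = \<phi> x + \<phi> y" for x y by (rule add)
    show "\<phi> (scaleR r x) = scaleR r (\<phi> x)" for r x by (simp add: scaleR_scaleC sc scaleR_conv_of_real)
    show "norm (\<phi> x) \<le> norm x * B" for x using bnd[of x] by (simp add: mult.commute)
  qed
  have phi0: "\<phi> 0 = 0" using sc[of 0 0] by simp
  have phidiff: "\<phi> (x - y) = \<phi> x - \<phi> y" for x y
    using add[of x "- y"] sc[of "-1" y] by (simp add: scaleC_minus1)
  define N where "N = \<phi> -` {0}"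
  have csN: "csub N" unfolding csub_def N_def by (simp add: phi0 add sc)
  have clN: "closed N" unfolding N_def
    by (intro continuous_closed_vimage) (auto simp: linear_continuous_at bl)
  define z where "z = x0 - cproj N x0"
  have zo: "z \<in> orth_compl N" unfolding z_def by (rule cproj[OF csN clN])
  have "\<phi> (cproj N x0) = 0" using cproj(1)[OF csN clN, of x0] by (simp add: N_def)
  then have phz: "\<phi> z = \<phi> x0" by (simp add: z_def phidiff)
  then have "z \<noteq> 0" using x0 phi0 by auto
  then have nz: "cinner z z \<noteq> 0" by (simp add: cinner_eq_zero_iff)
  define w where "w = scaleC (cnj (\<phi> z / cinner z z)) z"
  have "\<phi> x = cinner x w" for x
  proof -
    define v where "v = x - scaleC (\<phi> x / \<phi> z) z"
    have "\<phi> v = 0" using x0 phz by (simp add: v_def phidiff sc)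
    then have "v \<in> N" by (simp add: N_def)
    then have "cinner v z = 0" using zo orth_complD' by (metis cinner_commute complex_cnj_zero)
    then have "cinner x z = (\<phi> x / \<phi> z) * cinner z z"
      by (simp add: v_def cinner_diff_left cinner_scaleC_left)
    then show ?thesis using nz x0 phz by (simp add: w_def cinner_scaleC_right)
  qed
  then show ?thesis by blast
qed

lemma cadjoint:
  fixes K :: "'a::{complex_inner,complete_space} \<Rightarrow> 'b::complex_inner"
  assumes "bounded_clinear K"
  shows "cinner (K x) y = cinner x (cadjoint K y)"
proof -
  from assms obtain B where add: "\<And>x y. K (x + y) = K x + K y"
    and sc: "\<And>a x. K (scaleC a x) = scaleC a (K x)" and B: "\<And>x. norm (K x) \<le> B * norm x"
    unfolding bounded_clinear_def by blast
  have "\<exists>w. \<forall>x. cinner (K x) y = cinner x w" for y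
  proof (rule riesz)
    show "cinner (K (x + x')) y = cinner (K x) y + cinner (K x') y" for x x'
      by (simp add: add cinner_add_left)
    show "cinner (K (scaleC a x)) y = a * cinner (K x) y" for a x
      by (simp add: sc cinner_scaleC_left)
    show "cmod (cinner (K x) y) \<le> (B * norm y) * norm x" for x
    proof -
      have "cmod (cinner (K x) y) \<le> norm (K x) * norm y" by (rule cauchy_schwarz)
      also have "\<dots> \<le> B * norm x * norm y" using B[of x] by (simp add: mult_right_mono)
      finally show ?thesis by (simp add: algebra_simps)
    qed
  qed
  then have "\<exists>G. \<forall>x y. cinner (K x) y = cinner x (G y)" by metis
  then have "\<forall>x y. cinner (K x) y = cinner x (cadjoint K y)"
    unfolding cadjoint_def by (rule someI_ex)
  then show ?thesis by blast
qed

lemma baire_step: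
  fixes K :: "'a::complex_inner \<Rightarrow> 'b::{complex_inner,complete_space}"
  assumes bl: "bounded_linear K" and cl: "closed (range K)"
  shows "\<exists>n::nat. \<exists>y0 r. r > 0 \<and> y0 \<in> range K \<and>
           (\<forall>y\<in>range K. dist y y0 < r \<longrightarrow> y \<in> closure (K ` cball 0 (real n)))"
proof -
  define Y where "Y = range K"
  define X where "X = top_of_set Y"
  define T where "T = (\<lambda>n::nat. closure (K ` cball 0 (real n)))"
  have TY: "T n \<subseteq> Y" for n
    unfolding T_def Y_def by (rule closure_minimal[OF _ cl]) blast
  have clT: "closedin X (T n)" for n
    unfolding X_def by (rule closed_subset[OF TY]) (simp add: T_def)
  have UT: "\<Union>(range T) = Y"
  proof (rule equalityI)
    show "\<Union>(range T) \<subseteq> Y" using TY by (simp add: UN_subset_iff)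
    show "Y \<subseteq> \<Union>(range T)"
    proof
      fix y assume "y \<in> Y"
      then obtain x where y: "y = K x" unfolding Y_def by blast
      obtain n :: nat where "norm x \<le> real n" using real_arch_simple[of "norm x"] by (elim exE)
      then have "x \<in> cball 0 (real n)" by simp
      then have "y \<in> K ` cball 0 (real n)" unfolding y by (rule imageI)
      then have "y \<in> T n" unfolding T_def by (rule closure_subset[THEN subsetD])
      then show "y \<in> \<Union>(range T)" by (rule UnionI[OF rangeI])
    qed
  qed
  have cm: "completely_metrizable_space X"
    unfolding X_def using cl
    by (intro completely_metrizable_space_closedin completely_metrizable_space_euclidean)
       (simp add: Y_def)
  have "\<exists>n. X interior_of T n \<noteq> {}"
  proof (rule ccontr)
    assume a: "\<not> ?thesis"
    have "X interior_of \<Union>(range T) = {}"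
    proof (rule Baire_category_alt)
      show "completely_metrizable_space X \<or> locally_compact_space X \<and> regular_space X"
        using cm by (rule disjI1)
      show "countable (range T)" by simp
      show "closedin X S \<and> X interior_of S = {}" if "S \<in> range T" for S
      proof -
        from that obtain m where m: "S = T m" by (rule rangeE)
        have "X interior_of T m = {}" using a by simp
        then show ?thesis using clT[of m] m by simp
      qed
    qed
    moreover have "topspace X = Y" by (simp add: X_def)
    ultimately have "X interior_of topspace X = {}" using UT by simp
    then have "topspace X = {}" by (simp only: interior_of_topspace)
    then have "Y = {}" using \<open>topspace X = Y\<close> by simp
    then show False by (simp add: Y_def)
  qed
  then obtain n y0 where y0: "y0 \<in> X interior_of T n" by blast
  have "openin (top_of_set Y) (X interior_of T n)" unfolding X_def by (rule openin_interior_of)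
  then have "\<exists>V. open V \<and> X interior_of T n = Y \<inter> V" by (simp only: openin_open)
  then obtain V where V: "open V" "X interior_of T n = Y \<inter> V" by blast
  have "y0 \<in> V" using y0 unfolding V(2) by (rule IntD2)
  then obtain r where r: "r > 0" "ball y0 r \<subseteq> V"
    using V(1) open_contains_ball by blast
  have y0Y: "y0 \<in> Y" using y0 unfolding V(2) by (rule IntD1)
  have "\<forall>y\<in>range K. dist y y0 < r \<longrightarrow> y \<in> closure (K ` cball 0 (real n))"
  proof (intro ballI impI)
    fix y assume "y \<in> range K" "dist y y0 < r"
    then have "y \<in> ball y0 r" by (simp add: dist_commute)
    then have "y \<in> V" using r(2) by (rule rev_subsetD)
    then have "y \<in> Y \<inter> V" using \<open>y \<in> range K\<close> unfolding Y_def by (rule IntI[rotated])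
    then have "y \<in> X interior_of T n" unfolding V(2) .
    then have "y \<in> T n" by (rule interior_of_subset[THEN subsetD])
    then show "y \<in> closure (K ` cball 0 (real n))" by (simp add: T_def)
  qed
  then show ?thesis using r(1) y0Y unfolding Y_def
    by (intro exI[of _ n] exI[of _ y0] exI[of _ r] conjI)
qed

lemma approx_step:
  fixes K :: "'a::complex_inner \<Rightarrow> 'b::{complex_inner,complete_space}"
  assumes bl: "bounded_linear K" and cl: "closed (range K)"
  shows "\<exists>M\<ge>0. \<forall>y\<in>range K. \<forall>\<epsilon>>0. \<exists>x. norm x \<le> M * norm y \<and> norm (y - K x) < \<epsilon>"
proof -
  interpret K: bounded_linear K by (rule bl)
  obtain n :: nat and y0 r where r: "r > 0" and y0: "y0 \<in> range K"
    and B: "\<And>y. y \<in> range K \<Longrightarrow> dist y y0 < r \<Longrightarrow> y \<in> closure (K ` cball 0 (real n))"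
    using baire_step[OF bl cl] by blast
  have small: "\<exists>x. norm x \<le> 2 * real n \<and> norm (y - K x) < \<epsilon>"
    if y: "y \<in> range K" "norm y < r" and e: "\<epsilon> > 0" for y \<epsilon>
  proof -
    have "y0 + y \<in> range K" using y0 y by (auto simp: K.add[symmetric])
    moreover have "dist (y0 + y) y0 < r" using y by (simp add: dist_norm)
    ultimately have c1: "y0 + y \<in> closure (K ` cball 0 (real n))" using B by blast
    have c2: "y0 \<in> closure (K ` cball 0 (real n))" using B y0 r by simp
    obtain x1 where x1: "x1 \<in> cball 0 (real n)" "dist (K x1) (y0 + y) < \<epsilon>/2"
      using c1 e unfolding closure_approachable by (metis image_iff half_gt_zero)
    obtain x2 where x2: "x2 \<in> cball 0 (real n)" "dist (K x2) y0 < \<epsilon>/2"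
      using c2 e unfolding closure_approachable by (metis image_iff half_gt_zero)
    have "norm (x1 - x2) \<le> norm x1 + norm x2" by (rule norm_triangle_ineq4)
    also have "\<dots> \<le> 2 * real n" using x1 x2 by simp
    finally have nx: "norm (x1 - x2) \<le> 2 * real n" .
    have "y - K (x1 - x2) = (y0 + y - K x1) - (y0 - K x2)" by (simp add: K.diff)
    then have "norm (y - K (x1 - x2)) \<le> norm (y0 + y - K x1) + norm (y0 - K x2)"
      by (metis norm_triangle_ineq4)
    also have "\<dots> < \<epsilon>" using x1 x2 by (simp add: dist_norm norm_minus_commute)
    finally show ?thesis using nx by blast
  qed
  define M where "M = 4 * real n / r"
  have M0: "M \<ge> 0" using r by (simp add: M_def)
  have "\<exists>x. norm x \<le> M * norm y \<and> norm (y - K x) < \<epsilon>"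
    if y: "y \<in> range K" and e: "\<epsilon> > 0" for y \<epsilon>
  proof (cases "y = 0")
    case True then show ?thesis using e by (intro exI[of _ 0]) simp
  next
    case False
    define s where "s = r / (2 * norm y)"
    have s: "s > 0" using r False by (simp add: s_def)
    have ys: "scaleR s y \<in> range K" using y by (auto simp: K.scaleR[symmetric])
    have "norm (scaleR s y) = s * norm y" using s by simp
    also have "\<dots> = r / 2" using False by (simp add: s_def)
    finally have "norm (scaleR s y) = r / 2" .
    then have "norm (scaleR s y) < r" using r by simp
    then obtain x' where x': "norm x' \<le> 2 * real n" "norm (scaleR s y - K x') < s * \<epsilon>"
      using small[OF ys _ ] s e by (meson mult_pos_pos)
    define x where "x = scaleR (1/s) x'"
    have "y - K x = scaleR (1/s) (scaleR s y - K x')"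
      using s by (simp add: x_def K.scaleR algebra_simps)
    then have "norm (y - K x) = norm (scaleR s y - K x') / s" using s by simp
    also have "\<dots> < \<epsilon>" using x' s by (simp add: field_simps)
    finally have 1: "norm (y - K x) < \<epsilon>" .
    have "norm x = norm x' / s" using s by (simp add: x_def)
    also have "\<dots> \<le> 2 * real n / s" using x' s by (simp add: divide_right_mono)
    also have "\<dots> = M * norm y" using False r by (simp add: s_def M_def field_simps)
    finally show ?thesis using 1 by blast
  qed
  then show ?thesis using M0 by blast
qed

lemma open_mapping:
  fixes K :: "'a::{complex_inner,complete_space} \<Rightarrow> 'b::{complex_inner,complete_space}"
  assumes bl: "bounded_linear K" and cl: "closed (range K)"
  shows "\<exists>C. \<forall>y\<in>range K. \<exists>x. K x = y \<and> norm x \<le> C * norm y"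
proof -
  interpret K: bounded_linear K by (rule bl)
  obtain M where M0: "M \<ge> 0"
    and A: "\<forall>y\<in>range K. \<forall>\<epsilon>>0. \<exists>x. norm x \<le> M * norm y \<and> norm (y - K x) < \<epsilon>"
    using approx_step[OF bl cl] by blast
  define Q where "Q = (\<lambda>y \<epsilon> x. y \<in> range K \<and> \<epsilon> > 0 \<longrightarrow> norm x \<le> M * norm y \<and> norm (y - K x) < \<epsilon>)"
  have H: "\<exists>x. Q y \<epsilon> x" for y \<epsilon>
  proof (cases "y \<in> range K \<and> \<epsilon> > 0")
    case True then show ?thesis using A unfolding Q_def by blast
  next
    case False then show ?thesis unfolding Q_def by blast
  qed
  have "\<forall>y. \<exists>f. \<forall>\<epsilon>. Q y \<epsilon> (f \<epsilon>)"
  proof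
    fix y show "\<exists>f. \<forall>\<epsilon>. Q y \<epsilon> (f \<epsilon>)" by (rule choice) (simp add: H)
  qed
  then have "\<exists>g. \<forall>y. \<forall>\<epsilon>. Q y \<epsilon> (g y \<epsilon>)" by (rule choice)
  then obtain g where gQ: "\<And>y \<epsilon>. Q y \<epsilon> (g y \<epsilon>)" by blast
  have g: "norm (g y \<epsilon>) \<le> M * norm y \<and> norm (y - K (g y \<epsilon>)) < \<epsilon>"
    if "y \<in> range K" "\<epsilon> > 0" for y \<epsilon>
    using gQ[of y \<epsilon>] that unfolding Q_def by simp
  have "\<exists>x. K x = y \<and> norm x \<le> (2 * M) * norm y" if y: "y \<in> range K" for y
  proof (cases "y = 0")
    case True then show ?thesis by (intro exI[of _ 0]) simp
  next
    case False
    define c where "c = norm y"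
    have c: "c > 0" using False by (simp add: c_def)
    define q :: real where "q = 1/2"
    have q: "0 < q" "q < 1" by (auto simp: q_def)
    define e where "e = (\<lambda>k::nat. c * q ^ Suc k)"
    have e: "e k > 0" for k using c q by (simp add: e_def)
    define ys where "ys = rec_nat y (\<lambda>k v. v - K (g v (e k)))"
    have ys0: "ys 0 = y" by (simp add: ys_def)
    have ysS: "ys (Suc k) = ys k - K (g (ys k) (e k))" for k by (simp add: ys_def)
    define xs where "xs = (\<lambda>k. g (ys k) (e k))"
    have yin: "ys k \<in> range K" for k
    proof (induction k)
      case 0 then show ?case using y by (simp add: ys0)
    next
      case (Suc k)
      then obtain u where "ys k = K u" by blast
      then have "ys (Suc k) = K (u - g (ys k) (e k))" by (simp add: ysS K.diff)
      then show ?case by blast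
    qed
    have gk: "norm (xs k) \<le> M * norm (ys k) \<and> norm (ys k - K (xs k)) < e k" for k
      unfolding xs_def using g[OF yin e] .
    have yb: "norm (ys k) \<le> c * q ^ k" for k
    proof (induction k)
      case 0 then show ?case by (simp add: ys0 c_def)
    next
      case (Suc k)
      have "norm (ys (Suc k)) < e k" using gk[of k] by (simp add: ysS xs_def)
      then show ?case by (simp add: e_def)
    qed
    have xb: "norm (xs k) \<le> M * c * q ^ k" for k
    proof -
      have "norm (xs k) \<le> M * norm (ys k)" using gk[of k] by simp
      also have "\<dots> \<le> M * (c * q ^ k)" using yb[of k] M0 by (rule mult_left_mono)
      finally show ?thesis by (simp add: mult.assoc)
    qed
    define S where "S = (\<lambda>n. \<Sum>k<n. xs k)"
    have KS: "K (S n) = y - ys n" for n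
    proof (induction n)
      case 0 then show ?case by (simp add: S_def ys0)
    next
      case (Suc n)
      have "K (S (Suc n)) = K (S n) + K (xs n)" by (simp add: S_def K.add)
      then show ?case using Suc by (simp add: ysS xs_def)
    qed
    define B where "B = 2 * M * c"
    have B0: "B \<ge> 0" using M0 c by (simp add: B_def)
    have Sd: "norm (S m - S n) \<le> B * q ^ n - B * q ^ m" if "n \<le> m" for n m
      using that
    proof (induction m rule: dec_induct)
      case base then show ?case by simp
    next
      case (step m)
      have "S (Suc m) - S n = (S m - S n) + xs m" by (simp add: S_def)
      then have "norm (S (Suc m) - S n) \<le> norm (S m - S n) + norm (xs m)"
        by (metis norm_triangle_ineq)
      also have "\<dots> \<le> (B * q ^ n - B * q ^ m) + M * c * q ^ m"
        using step.IH xb[of m] by (rule add_mono)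
      also have "\<dots> = B * q ^ n - B * q ^ Suc m" by (simp add: B_def q_def)
      finally show ?case .
    qed
    have Sd': "dist (S m) (S n) \<le> B * q ^ N" if "N \<le> m" "N \<le> n" for m n N
    proof -
      have pw: "q ^ k \<le> q ^ N" if "N \<le> k" for k
        using q that by (intro power_decreasing) auto
      have nn: "0 \<le> B * q ^ k" for k using B0 q by simp
      show ?thesis
      proof (cases "n \<le> m")
        case True
        have "dist (S m) (S n) \<le> B * q ^ n - B * q ^ m" using Sd[OF True] by (simp add: dist_norm)
        also have "\<dots> \<le> B * q ^ N" using nn[of m] pw[OF that(2)] B0 by (smt (verit) mult_left_mono)
        finally show ?thesis .
      next
        case False
        then have "m \<le> n" by simp
        have "dist (S m) (S n) \<le> B * q ^ m - B * q ^ n"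
          using Sd[OF \<open>m \<le> n\<close>] by (simp add: dist_norm norm_minus_commute)
        also have "\<dots> \<le> B * q ^ N" using nn[of n] pw[OF that(1)] B0 by (smt (verit) mult_left_mono)
        finally show ?thesis .
      qed
    qed
    have "Cauchy S"
    proof (rule metric_CauchyI)
      fix \<epsilon> :: real assume "\<epsilon> > 0"
      then have "\<epsilon> / (B + 1) > 0" using B0 by simp
      then obtain N where N: "q ^ N < \<epsilon> / (B + 1)" using real_arch_pow_inv q by blast
      have "B * q ^ N < \<epsilon>"
      proof -
        have "(B + 1) * q ^ N < \<epsilon>" using N B0 by (simp add: field_simps)
        moreover have "B * q ^ N \<le> (B + 1) * q ^ N" using q by simp
        ultimately show ?thesis by linarith
      qed
      then show "\<exists>N. \<forall>m\<ge>N. \<forall>n\<ge>N. dist (S m) (S n) < \<epsilon>"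
        using Sd' by (meson order.strict_trans1)
    qed
    then have "convergent S" by (simp only: Cauchy_convergent_iff)
    then obtain x where lim: "S \<longlonglongrightarrow> x" unfolding convergent_def by (elim exE)
    have l1: "(\<lambda>n. K (S n)) \<longlonglongrightarrow> K x" by (rule K.tendsto[OF lim])
    have cq: "(\<lambda>n. c * q ^ n) \<longlonglongrightarrow> 0"
      by (rule tendsto_mult_right_zero, rule LIMSEQ_power_zero) (use q in simp)
    have ev: "\<forall>\<^sub>F n in sequentially. norm (ys n) \<le> c * q ^ n"
      using yb by (simp add: always_eventually)
    have "ys \<longlonglongrightarrow> 0" by (rule Lim_null_comparison[OF ev cq])
    then have l2: "(\<lambda>n. y - ys n) \<longlonglongrightarrow> y - 0" by (intro tendsto_diff tendsto_const)
    have l2': "(\<lambda>n. K (S n)) \<longlonglongrightarrow> y - 0" unfolding KS by (rule l2)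
    have "K x = y - 0" using l1 l2' by (rule LIMSEQ_unique)
    then have Kx: "K x = y" by simp
    have ln: "(\<lambda>n. norm (S n)) \<longlonglongrightarrow> norm x" by (intro tendsto_norm lim)
    have nb: "norm (S n) \<le> B" for n
    proof -
      have "norm (S n - S 0) \<le> B * q ^ 0 - B * q ^ n" by (rule Sd) simp
      moreover have "S 0 = 0" by (simp add: S_def)
      moreover have "0 \<le> B * q ^ n" using B0 q by simp
      ultimately show ?thesis by simp
    qed
    have "norm x \<le> B" using ln by (rule LIMSEQ_le_const2) (use nb in blast)
    then show ?thesis using Kx by (auto simp: B_def c_def)
  qed
  then show ?thesis by blast
qed

lemma clin_facts:
  fixes K :: "'a::complex_inner \<Rightarrow> 'b::complex_inner"
  assumes "bounded_clinear K"
  shows "K (x + y) = K x + K y" "K (scaleC a x) = scaleC a (K x)" "K 0 = 0"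
    "K (x - y) = K x - K y"
proof -
  show a: "K (x + y) = K x + K y" "K (scaleC a x) = scaleC a (K x)"
    using assms unfolding bounded_clinear_def by blast+
  interpret bounded_linear K using bounded_clinear_bounded_linear[OF assms] .
  show "K 0 = 0" by (rule zero)
  show "K (x - y) = K x - K y" by (rule diff)
qed

lemma csub_range:
  assumes bc: "bounded_clinear K"
  shows "csub (range K)"
  unfolding csub_def
proof (intro conjI ballI allI)
  show "0 \<in> range K" using clin_facts(3)[OF bc] by (metis rangeI)
  fix u v assume "u \<in> range K" "v \<in> range K"
  then obtain a b where "u = K a" "v = K b" by (elim rangeE)
  then have "u + v = K (a + b)" by (simp add: clin_facts(1)[OF bc])
  then show "u + v \<in> range K" by (rule ssubst) (rule rangeI)
next
  fix c u assume "u \<in> range K"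
  then obtain a where "u = K a" by (elim rangeE)
  then have "scaleC c u = K (scaleC c a)" by (simp add: clin_facts(2)[OF bc])
  then show "scaleC c u \<in> range K" by (rule ssubst) (rule rangeI)
qed

lemma csub_ker: "bounded_clinear K \<Longrightarrow> csub (ker K)"
  unfolding csub_def ker_def by (simp add: clin_facts)

lemma closed_ker: "bounded_clinear (K::'a::complex_inner \<Rightarrow> 'b::complex_inner) \<Longrightarrow> closed (ker K)"
proof -
  assume a: "bounded_clinear K"
  have "ker K = K -` {0}" by (auto simp: ker_def)
  moreover have "closed (K -` {0})"
    by (intro continuous_closed_vimage)
       (auto simp: linear_continuous_at bounded_clinear_bounded_linear[OF a])
  ultimately show ?thesis by simp
qed

locale pinv_setup =
  fixes K :: "'h::{complex_inner,complete_space} \<Rightarrow> 'h"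
  assumes bc: "bounded_clinear K" and cl: "closed (range K)"
begin

abbreviation "N \<equiv> ker K"
abbreviation "R \<equiv> range K"

lemma csN: "csub N" by (rule csub_ker[OF bc])
lemma clN: "closed N" by (rule closed_ker[OF bc])
lemma csR: "csub R" by (rule csub_range[OF bc])

lemma PN: "cproj N x \<in> N" "x - cproj N x \<in> orth_compl N"
  using cproj[OF csN clN] by auto

lemma KP: "K (cproj N x) = 0" using PN(1) by (simp add: ker_def)

lemma pinv_unique:
  assumes "u \<in> orth_compl N" "K u = K v" "v \<in> orth_compl N"
  shows "u = v"
proof -
  have "u - v \<in> N" using assms(2) by (simp add: ker_def clin_facts[OF bc])
  moreover have "u - v \<in> orth_compl N" using csub_diff[OF csub_orth_compl assms(1,3)] .
  ultimately have "u - v = 0" by (rule orth_compl_inter)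
  then show ?thesis by simp
qed

lemma pinv_char:
  assumes "u \<in> orth_compl N" "K u = cproj R y"
  shows "pinv K y = u"
  unfolding pinv_def
proof (rule the_equality)
  show "u \<in> orth_compl N \<and> K u = cproj R y" using assms by simp
  show "v = u" if "v \<in> orth_compl N \<and> K v = cproj R y" for v
    using pinv_unique[of v u] that assms by simp
qed

lemma pinv_exists: "\<exists>u. u \<in> orth_compl N \<and> K u = cproj R y"
proof -
  have "cproj R y \<in> R" using cproj[OF csR cl] by simp
  then obtain x where x: "cproj R y = K x" by blast
  have "K (x - cproj N x) = K x" by (simp add: clin_facts[OF bc] KP)
  then show ?thesis using PN(2)[of x] x by (intro exI[of _ "x - cproj N x"]) simp
qed

lemma pinv_prop: "pinv K y \<in> orth_compl N" "K (pinv K y) = cproj R y"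
proof -
  obtain u where u: "u \<in> orth_compl N" "K u = cproj R y" using pinv_exists by blast
  then show "pinv K y \<in> orth_compl N" "K (pinv K y) = cproj R y" using pinv_char[OF u] by simp_all
qed

lemma cproj_R_K: "cproj R (K x) = K x"
  by (rule cproj_eq[OF csR cl]) (auto simp: csub_0[OF csub_orth_compl])

lemma pinv_K: "pinv K (K x) = x - cproj N x"
  by (rule pinv_char) (simp_all add: PN cproj_R_K clin_facts[OF bc] KP)

lemma pinv_add: "pinv K (x + y) = pinv K x + pinv K y"
proof (rule pinv_char)
  show "pinv K x + pinv K y \<in> orth_compl N"
    by (rule csub_add[OF csub_orth_compl pinv_prop(1) pinv_prop(1)])
  show "K (pinv K x + pinv K y) = cproj R (x + y)"
    by (simp add: clin_facts[OF bc] pinv_prop cproj_add[OF csR cl])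
qed

lemma pinv_scaleC: "pinv K (scaleC a x) = scaleC a (pinv K x)"
proof (rule pinv_char)
  show "scaleC a (pinv K x) \<in> orth_compl N"
    by (rule csub_scaleC[OF csub_orth_compl pinv_prop(1)])
  show "K (scaleC a (pinv K x)) = cproj R (scaleC a x)"
    by (simp add: clin_facts[OF bc] pinv_prop cproj_scaleC[OF csR cl])
qed

lemma Q_norm: "norm (x - cproj N x) \<le> norm x"
proof -
  have "cinner (x - cproj N x) (cproj N x) = 0" using PN orth_complD' by blast
  then show ?thesis using pythagoras_le[of "x - cproj N x" "cproj N x"] by simp
qed

lemma pinv_bounded: "\<exists>C. \<forall>y. norm (pinv K y) \<le> C * norm y"
proof -
  obtain C where C: "\<forall>y\<in>R. \<exists>x. K x = y \<and> norm x \<le> C * norm y"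
    using open_mapping[OF bounded_clinear_bounded_linear[OF bc] cl] by blast
  have "norm (pinv K y) \<le> \<bar>C\<bar> * norm y" for y
  proof -
    have "cproj R y \<in> R" using cproj[OF csR cl] by simp
    then obtain x where x: "K x = cproj R y" "norm x \<le> C * norm (cproj R y)" using C by blast
    have "pinv K y = x - cproj N x"
      by (rule pinv_char) (simp_all add: PN x clin_facts[OF bc] KP)
    then have "norm (pinv K y) \<le> norm x" using Q_norm by simp
    also have "\<dots> \<le> C * norm (cproj R y)" by (rule x(2))
    also have "\<dots> \<le> \<bar>C\<bar> * norm (cproj R y)" by (simp add: mult_right_mono)
    also have "\<dots> \<le> \<bar>C\<bar> * norm y" using cproj_norm[OF csR cl] by (simp add: mult_left_mono)
    finally show ?thesis .
  qed
  then show ?thesis by blast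
qed

end

lemma cmod_diff_sq:
  "(cmod (a - b))\<^sup>2 = (cmod a)\<^sup>2 + (cmod b)\<^sup>2 - 2 * Re (a * cnj b)"
  by (simp add: cmod_power2 power2_diff algebra_simps)

theorem theorem3p9:
  fixes M :: "'w measure"
    and K :: "'h::{complex_inner, complete_space} \<Rightarrow> 'h"
    and F :: "'w \<Rightarrow> 'h"
    and f :: 'h
    and c :: "'w \<Rightarrow> complex"
  assumes "separable_space TYPE('h)"
    and "bounded_clinear K"
    and "closed (range K)"
    and "parseval_cont_K_frame M K F"
    and "square_integrable M c"
    and "has_weak_integral M c F (K f)"
  shows "(\<integral>\<omega>. (cmod (c \<omega>))\<^sup>2 \<partial>M) =
           (\<integral>\<omega>. (cmod (c \<omega> - cinner f (pinv K (F \<omega>))))\<^sup>2 \<partial>M)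
         + (\<integral>\<omega>. (cmod (cinner f (pinv K (F \<omega>))))\<^sup>2 \<partial>M)"
proof -
  interpret pinv_setup K using assms(2,3) by unfold_locales
  have bc: "bounded_clinear K" by (rule assms(2))
  obtain C where C: "\<And>y. norm (pinv K y) \<le> C * norm y" using pinv_bounded by blast
  have "\<exists>w. \<forall>x. cinner (pinv K x) f = cinner x w"
  proof (rule riesz)
    show "cinner (pinv K (x + y)) f = cinner (pinv K x) f + cinner (pinv K y) f" for x y
      by (simp add: pinv_add cinner_add_left)
    show "cinner (pinv K (scaleC a x)) f = a * cinner (pinv K x) f" for a x
      by (simp add: pinv_scaleC cinner_scaleC_left)
    show "cmod (cinner (pinv K x) f) \<le> (C * norm f) * norm x" for x
    proof -
      have "cmod (cinner (pinv K x) f) \<le> norm (pinv K x) * norm f" by (rule cauchy_schwarz)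
      also have "\<dots> \<le> C * norm x * norm f" using C[of x] by (simp add: mult_right_mono)
      finally show ?thesis by (simp add: algebra_simps)
    qed
  qed
  then obtain g where g: "\<And>x. cinner (pinv K x) f = cinner x g" by blast
  define d where "d = (\<lambda>\<omega>. cinner g (F \<omega>))"
  have dd: "cinner f (pinv K (F \<omega>)) = d \<omega>" for \<omega>
    unfolding d_def by (metis cinner_commute g)
  define P where "P = cproj N"
  define Qf where "Qf = f - P f"
  have adj: "cinner (K x) y = cinner x (cadjoint K y)" for x y by (rule cadjoint[OF bc])
  have PQ: "cinner (x - P x) (P f) = 0" "cinner (P x) Qf = 0" for x
    unfolding P_def Qf_def using PN orth_complD orth_complD' by blast+
  have eqx: "cinner x (cadjoint K g) = cinner x Qf" for x
  proof -
    have "cinner x (cadjoint K g) = cinner (x - P x) f"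
      by (simp add: adj[symmetric] g[symmetric] pinv_K P_def)
    also have "f = Qf + P f" by (simp add: Qf_def)
    also have "cinner (x - P x) (Qf + P f) = cinner (x - P x) Qf"
      by (simp add: cinner_add_right PQ)
    also have "\<dots> = cinner x Qf" by (simp add: cinner_diff_left PQ)
    finally show ?thesis .
  qed
  have adjg: "cadjoint K g = Qf"
  proof -
    have "cinner (cadjoint K g - Qf) (cadjoint K g - Qf) = 0"
      by (simp add: cinner_diff_right eqx)
    then have "cadjoint K g - Qf = 0" by (rule cinner_self_eq_zero)
    then show ?thesis by simp
  qed
  have Kfg: "cinner (K f) g = complex_of_real ((norm Qf)\<^sup>2)"
  proof -
    have "cinner (K f) g = cinner f Qf" by (simp add: adj adjg)
    also have "cinner f Qf = cinner (Qf + P f) Qf" by (simp add: Qf_def)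
    also have "\<dots> = cinner Qf Qf" by (simp add: cinner_add_left PQ)
    finally show ?thesis by (simp add: cinner_self)
  qed
  have wm: "weakly_measurable M F" and pars: "\<And>h. (\<integral>\<^sup>+\<omega>. ennreal ((cmod (cinner h (F \<omega>)))\<^sup>2) \<partial>M) = ennreal ((norm (cadjoint K h))\<^sup>2)"
    using assms(4) unfolding parseval_cont_K_frame_def by blast+
  have dmeas: "d \<in> borel_measurable M" using wm unfolding weakly_measurable_def d_def by blast
  have d2meas: "(\<lambda>\<omega>. (cmod (d \<omega>))\<^sup>2) \<in> borel_measurable M" using dmeas by measurable
  have nnd: "(\<integral>\<^sup>+\<omega>. ennreal ((cmod (d \<omega>))\<^sup>2) \<partial>M) = ennreal ((norm Qf)\<^sup>2)"
    using pars[of g] by (simp add: d_def adjg)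
  have intd: "integrable M (\<lambda>\<omega>. (cmod (d \<omega>))\<^sup>2)"
    by (rule integrableI_nn_integral_finite[OF d2meas _ nnd]) simp
  have Id: "(\<integral>\<omega>. (cmod (d \<omega>))\<^sup>2 \<partial>M) = (norm Qf)\<^sup>2"
    using integral_eq_nn_integral[OF d2meas] nnd by simp
  have intc: "integrable M (\<lambda>\<omega>. (cmod (c \<omega>))\<^sup>2)"
    using assms(5) unfolding square_integrable_def by blast
  have wi: "integrable M (\<lambda>\<omega>. c \<omega> * cinner (F \<omega>) g)"
    "cinner (K f) g = (\<integral>\<omega>. c \<omega> * cinner (F \<omega>) g \<partial>M)"
    using assms(6) unfolding has_weak_integral_def by blast+
  have cF: "cinner (F \<omega>) g = cnj (d \<omega>)" for \<omega> by (simp add: d_def cinner_commute[of "F \<omega>" g])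
  have intcd: "integrable M (\<lambda>\<omega>. c \<omega> * cnj (d \<omega>))" using wi(1) by (simp add: cF)
  have Icd: "(\<integral>\<omega>. c \<omega> * cnj (d \<omega>) \<partial>M) = complex_of_real ((norm Qf)\<^sup>2)"
    using wi(2) Kfg by (simp add: cF)
  have intRe: "integrable M (\<lambda>\<omega>. Re (c \<omega> * cnj (d \<omega>)))" using intcd by (rule integrable_Re)
  have IRe: "(\<integral>\<omega>. Re (c \<omega> * cnj (d \<omega>)) \<partial>M) = (norm Qf)\<^sup>2"
    using integral_bounded_linear[OF bounded_linear_Re intcd] Icd by simp
  have "(\<integral>\<omega>. (cmod (c \<omega> - d \<omega>))\<^sup>2 \<partial>M)
      = (\<integral>\<omega>. (cmod (c \<omega>))\<^sup>2 + (cmod (d \<omega>))\<^sup>2 - 2 * Re (c \<omega> * cnj (d \<omega>)) \<partial>M)"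
    by (simp add: cmod_diff_sq)
  also have "\<dots> = (\<integral>\<omega>. (cmod (c \<omega>))\<^sup>2 \<partial>M) + (\<integral>\<omega>. (cmod (d \<omega>))\<^sup>2 \<partial>M)
       - 2 * (\<integral>\<omega>. Re (c \<omega> * cnj (d \<omega>)) \<partial>M)"
  proof -
    have i1: "integrable M (\<lambda>\<omega>. (cmod (c \<omega>))\<^sup>2 + (cmod (d \<omega>))\<^sup>2)"
      by (rule Bochner_Integration.integrable_add[OF intc intd])
    have i2: "integrable M (\<lambda>\<omega>. 2 * Re (c \<omega> * cnj (d \<omega>)))"
      by (rule integrable_mult_right[OF intRe])
    have "(\<integral>\<omega>. (cmod (c \<omega>))\<^sup>2 + (cmod (d \<omega>))\<^sup>2 - 2 * Re (c \<omega> * cnj (d \<omega>)) \<partial>M)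
        = (\<integral>\<omega>. (cmod (c \<omega>))\<^sup>2 + (cmod (d \<omega>))\<^sup>2 \<partial>M) - (\<integral>\<omega>. 2 * Re (c \<omega> * cnj (d \<omega>)) \<partial>M)"
      by (rule Bochner_Integration.integral_diff[OF i1 i2])
    also have "(\<integral>\<omega>. (cmod (c \<omega>))\<^sup>2 + (cmod (d \<omega>))\<^sup>2 \<partial>M)
        = (\<integral>\<omega>. (cmod (c \<omega>))\<^sup>2 \<partial>M) + (\<integral>\<omega>. (cmod (d \<omega>))\<^sup>2 \<partial>M)"
      by (rule Bochner_Integration.integral_add[OF intc intd])
    also have "(\<integral>\<omega>. 2 * Re (c \<omega> * cnj (d \<omega>)) \<partial>M) = 2 * (\<integral>\<omega>. Re (c \<omega> * cnj (d \<omega>)) \<partial>M)"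
      by (rule integral_mult_right_zero)
    finally show ?thesis .
  qed
  finally have "(\<integral>\<omega>. (cmod (c \<omega> - d \<omega>))\<^sup>2 \<partial>M)
      = (\<integral>\<omega>. (cmod (c \<omega>))\<^sup>2 \<partial>M) - (norm Qf)\<^sup>2"
    using Id IRe by simp
  then show ?thesis using Id by (simp add: dd)
qed

end
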